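(* Let $0<\lambda<1$ and let $I_1\subset\mathbb{R}$ be an open interval containing $[-1,1]$. For every integer $n\ge1$ there exists $\delta(n)>0$ with $(n+1)\delta(n)<1-\lambda$ such that for every $C^1$ map $h:I_1\to\mathbb{R}$ with $\|h-\mathrm{id}\|_{1,I_1}<\delta(n)$ and $h(0)>0$ there exists an integer $k\ge1$ satisfying $$(n+1)|h(\lambda^k)-\lambda^k|>\lambda^k(1-\lambda),\qquad n|h(\lambda^k)-\lambda^k|<\lambda^{k-1}(1-\lambda),$$ and $$|(h(y)-y)-(h(\lambda^k)-\lambda^k)|<\tfrac14|h(\lambda^k)-\lambda^k|\quad\text{for every } y\in I_1 \text{ with } |y-\lambda^k|<\lambda^{k-1}(1-\lambda).$$
   Context: For an open set $J\subset\mathbb{R}$ and a $C^1$ map $u$ on $J$, $\|u\|_{1,J}=\sup_{x\in J}(|u(x)|+|u'(x)|)$. *)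

theory Defs
  imports "HOL-Analysis.Analysis"
begin

definition C1_on :: "real set \<Rightarrow> (real \<Rightarrow> real) \<Rightarrow> (real \<Rightarrow> real) \<Rightarrow> bool" where
  "C1_on J u u' \<longleftrightarrow> (\<forall>x\<in>J. (u has_real_derivative u' x) (at x)) \<and> continuous_on J u'"

text \<open>The C^1 norm sup over J of |u x| + |u' x|, where u' is the derivative of u;
  it is finite iff the set of values is bounded above.\<close>
definition C1_norm :: "real set \<Rightarrow> (real \<Rightarrow> real) \<Rightarrow> (real \<Rightarrow> real) \<Rightarrow> real" where
  "C1_norm J u u' = (SUP x\<in>J. \<bar>u x\<bar> + \<bar>u' x\<bar>)"

definition C1_norm_less :: "real set \<Rightarrow> (real \<Rightarrow> real) \<Rightarrow> (real \<Rightarrow> real) \<Rightarrow> real \<Rightarrow> bool" where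
  "C1_norm_less J u u' d \<longleftrightarrow>
     bdd_above ((\<lambda>x. \<bar>u x\<bar> + \<bar>u' x\<bar>) ` J) \<and> C1_norm J u u' < d"

end

theory Submission
  imports Defs
begin

lemma lip_aux:
  fixes g g' :: "real \<Rightarrow> real"
  assumes der: "\<forall>x\<in>I. (g has_real_derivative g' x) (at x)"
    and bd: "\<forall>x\<in>I. \<bar>g' x\<bar> \<le> d" and iv: "is_interval I"
    and a: "a \<in> I" and b: "b \<in> I" and ab: "a < b"
  shows "\<bar>g b - g a\<bar> \<le> d * \<bar>b - a\<bar>"
proof -
  have "\<And>x. a \<le> x \<Longrightarrow> x \<le> b \<Longrightarrow> x \<in> I"
    using iv a b unfolding is_interval_1 by blast
  then obtain z where z: "a < z" "z < b" "g b - g a = (b - a) * g' z"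
    using MVT2[OF ab, of g g'] der by blast
  have "z \<in> I" using \<open>\<And>x. a \<le> x \<Longrightarrow> x \<le> b \<Longrightarrow> x \<in> I\<close> z by auto
  hence "\<bar>g' z\<bar> \<le> d" using bd by auto
  thus ?thesis using z ab by (simp add: abs_mult mult_right_mono mult.commute)
qed

lemma lip:
  fixes g g' :: "real \<Rightarrow> real"
  assumes der: "\<forall>x\<in>I. (g has_real_derivative g' x) (at x)"
    and bd: "\<forall>x\<in>I. \<bar>g' x\<bar> \<le> d" and iv: "is_interval I"
    and a: "a \<in> I" and b: "b \<in> I" and d: "d \<ge> 0"
  shows "\<bar>g b - g a\<bar> \<le> d * \<bar>b - a\<bar>"
proof -
  consider "a < b" | "a = b" | "b < a" by linarith
  thus ?thesis
  proof cases
    case 1 thus ?thesis using lip_aux[OF der bd iv a b] by blast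
  next
    case 2 thus ?thesis using d by simp
  next
    case 3 thus ?thesis using lip_aux[OF der bd iv b a] by (simp add: abs_minus_commute)
  qed
qed

lemma aux4: "(M::real) \<noteq> 0 \<Longrightarrow> 4*M*(x/(8*M^2)) = x/(2*M)"
  by (simp add: power2_eq_square field_simps)

theorem lemma3p12:
  fixes lam :: real and I1 :: "real set"
  assumes "0 < lam" "lam < 1"
    and "open I1" "is_interval I1" "{-1..1} \<subseteq> I1"
  shows "\<forall>n::nat. n \<ge> 1 \<longrightarrow>
    (\<exists>\<delta>>0. (real n + 1) * \<delta> < 1 - lam \<and>
      (\<forall>h h'. C1_on I1 h h' \<longrightarrow>
         C1_norm_less I1 (\<lambda>x. h x - x) (\<lambda>x. h' x - 1) \<delta> \<longrightarrow> h 0 > 0 \<longrightarrow>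
         (\<exists>k::nat. k \<ge> 1 \<and>
            (real n + 1) * \<bar>h (lam ^ k) - lam ^ k\<bar> > lam ^ k * (1 - lam) \<and>
            real n * \<bar>h (lam ^ k) - lam ^ k\<bar> < lam ^ (k - 1) * (1 - lam) \<and>
            (\<forall>y\<in>I1. \<bar>y - lam ^ k\<bar> < lam ^ (k - 1) * (1 - lam) \<longrightarrow>
               \<bar>(h y - y) - (h (lam ^ k) - lam ^ k)\<bar> < \<bar>h (lam ^ k) - lam ^ k\<bar> / 4))))"
proof (intro allI impI)
  fix n :: nat assume n1: "n \<ge> 1"
  define N where "N = real n"
  have N1: "N \<ge> 1" using n1 by (simp add: N_def)
  define d where "d = lam * (1 - lam) / (8 * (N + 1)^2)"
  have dpos: "d > 0" using assms(1,2) N1 by (simp add: d_def)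
  have lam1: "lam * (1 - lam) < 1" using assms(1,2) mult_strict_mono[of lam 1 "1-lam" 1] by simp
  have dN1: "(N + 1) * d < 1 - lam"
  proof -
    have "(N + 1) * d = lam * (1 - lam) / (8 * (N + 1))"
      using N1 by (simp add: d_def power2_eq_square)
    also have "\<dots> \<le> lam * (1 - lam) / 8"
      using N1 assms(1,2) by (intro divide_left_mono) auto
    also have "\<dots> < 1 - lam" using assms(1,2) mult_strict_right_mono[of lam 8 "1-lam"] by simp
    finally show ?thesis .
  qed
  have dN2: "N * (N + 1) * d < 1"
  proof -
    have "N * (N + 1) * d = (N / (N+1)) * (lam * (1 - lam) / 8)"
      using N1 by (simp add: d_def power2_eq_square)
    also have "\<dots> \<le> 1 * (lam * (1 - lam) / 8)"
      using N1 assms(1,2) by (intro mult_right_mono) auto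
    also have "\<dots> < 1" using lam1 by simp
    finally show ?thesis .
  qed
  have dN3: "4 * (N + 1) * d \<le> lam"
  proof -
    have "4 * (N + 1) * d = lam * ((1 - lam) / (2 * (N + 1)))"
      using N1 aux4[of "N+1" "lam * (1 - lam)"] by (simp add: d_def)
    also have "\<dots> \<le> lam * 1"
      using N1 assms(1,2) by (intro mult_left_mono) auto
    finally show ?thesis by simp
  qed
  show "\<exists>\<delta>>0. (real n + 1) * \<delta> < 1 - lam \<and>
      (\<forall>h h'. C1_on I1 h h' \<longrightarrow>
         C1_norm_less I1 (\<lambda>x. h x - x) (\<lambda>x. h' x - 1) \<delta> \<longrightarrow> h 0 > 0 \<longrightarrow>
         (\<exists>k::nat. k \<ge> 1 \<and>
            (real n + 1) * \<bar>h (lam ^ k) - lam ^ k\<bar> > lam ^ k * (1 - lam) \<and>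
            real n * \<bar>h (lam ^ k) - lam ^ k\<bar> < lam ^ (k - 1) * (1 - lam) \<and>
            (\<forall>y\<in>I1. \<bar>y - lam ^ k\<bar> < lam ^ (k - 1) * (1 - lam) \<longrightarrow>
               \<bar>(h y - y) - (h (lam ^ k) - lam ^ k)\<bar> < \<bar>h (lam ^ k) - lam ^ k\<bar> / 4)))"
  proof (intro exI[of _ d] conjI allI impI)
    show "d > 0" by (rule dpos)
    show "(real n + 1) * d < 1 - lam" using dN1 by (simp add: N_def)
    fix h h' :: "real \<Rightarrow> real"
    assume C1: "C1_on I1 h h'"
      and nl: "C1_norm_less I1 (\<lambda>x. h x - x) (\<lambda>x. h' x - 1) d" and h0: "h 0 > 0"
    define g where "g = (\<lambda>x. h x - x)"
    have der: "\<forall>x\<in>I1. (g has_real_derivative (h' x - 1)) (at x)"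
      using C1 unfolding C1_on_def g_def by (auto intro!: derivative_eq_intros)
    have vb: "\<And>x. x \<in> I1 \<Longrightarrow> \<bar>g x\<bar> + \<bar>h' x - 1\<bar> < d"
    proof -
      fix x assume x: "x \<in> I1"
      have "\<bar>g x\<bar> + \<bar>h' x - 1\<bar> \<le> C1_norm I1 (\<lambda>x. h x - x) (\<lambda>x. h' x - 1)"
        using nl x unfolding C1_norm_less_def C1_norm_def g_def by (auto intro: cSUP_upper)
      thus "\<bar>g x\<bar> + \<bar>h' x - 1\<bar> < d" using nl unfolding C1_norm_less_def by linarith
    qed
    have gb: "\<And>x. x \<in> I1 \<Longrightarrow> \<bar>g x\<bar> < d"
    proof -
      fix x assume "x \<in> I1"
      from vb[OF this] show "\<bar>g x\<bar> < d" using abs_ge_zero[of "h' x - 1"] by linarith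
    qed
    have bd: "\<forall>x\<in>I1. \<bar>h' x - 1\<bar> \<le> d"
    proof
      fix x assume "x \<in> I1"
      from vb[OF this] show "\<bar>h' x - 1\<bar> \<le> d" using abs_ge_zero[of "g x"] by linarith
    qed
    have gl: "\<And>a b. a \<in> I1 \<Longrightarrow> b \<in> I1 \<Longrightarrow> \<bar>g b - g a\<bar> \<le> d * \<bar>b - a\<bar>"
      using lip[OF der bd assms(4)] dpos by auto
    have pI: "\<And>k::nat. lam ^ k \<in> I1"
    proof -
      fix k :: nat
      have "0 \<le> lam ^ k" "lam ^ k \<le> 1" using assms(1,2) by (auto intro: power_le_one)
      thus "lam ^ k \<in> I1" using assms(5) by auto
    qed
    have zI: "0 \<in> I1" using assms(5) by auto
    define c where "c = g 0"
    have c: "c > 0" "c < d" using h0 gb[OF zI] by (auto simp: c_def g_def)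
    define P where "P = (\<lambda>k::nat. (N + 1) * \<bar>g (lam ^ k)\<bar> > lam ^ k * (1 - lam))"
    obtain m where m: "lam ^ m < c / 2" using real_arch_pow_inv[of "c/2" lam] c assms(2) by auto
    have Pex: "P (Suc m)"
    proof -
      have lm: "lam ^ Suc m \<le> lam ^ m" using assms(1,2) by (simp add: power_decreasing)
      have "\<bar>g (lam ^ Suc m) - g 0\<bar> \<le> d * \<bar>lam ^ Suc m - 0\<bar>" by (rule gl[OF zI pI])
      hence "\<bar>g (lam ^ Suc m)\<bar> \<ge> c - d * lam ^ Suc m" using assms(1) by (simp add: c_def)
      moreover have "d * lam ^ Suc m \<le> d * lam ^ m" using lm dpos by simp
      moreover have "(N + 1) * d < 1" using dN1 assms(1) by linarith
      moreover have "lam ^ Suc m > 0" using assms(1) by simp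
      moreover have "(N + 1) * \<bar>g (lam ^ Suc m)\<bar> \<ge> (N + 1) * (c - d * lam ^ Suc m)"
        using calculation(1) N1 by (intro mult_left_mono) auto
      moreover have "(N + 1) * (c - d * lam ^ Suc m) = (N + 1) * c - ((N + 1) * d) * lam ^ Suc m"
        by (simp add: algebra_simps)
      moreover have "((N + 1) * d) * lam ^ Suc m < 1 * lam ^ Suc m"
        using calculation(3,4) by (intro mult_strict_right_mono) auto
      moreover have "(N + 1) * c \<ge> c" using N1 c by simp
      moreover have "lam ^ Suc m * (1 - lam) \<le> lam ^ Suc m" using assms(1) calculation(4)
        by (simp add: algebra_simps)
      ultimately show ?thesis unfolding P_def using m lm by linarith
    qed
    define k where "k = (LEAST k. 1 \<le> k \<and> P k)"
    have kP: "1 \<le> k \<and> P k" unfolding k_def by (rule LeastI[of _ "Suc m"]) (use Pex in auto)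
    have kmin: "\<And>j. j < k \<Longrightarrow> \<not> (1 \<le> j \<and> P j)" unfolding k_def by (rule not_less_Least)
    define B where "B = \<bar>g (lam ^ k)\<bar>"
    define L where "L = lam ^ (k - 1) * (1 - lam)"
    have Lpos: "L > 0" using assms(1,2) by (simp add: L_def)
    have lk: "lam ^ k = lam * lam ^ (k - 1)" using kP by (cases k) auto
    have PB: "(N + 1) * B > lam * L" using kP unfolding P_def B_def L_def lk by (simp add: mult.assoc)
    have second: "N * B < L"
    proof (cases "k = 1")
      case True
      have "B < d" using gb[OF pI] by (simp add: B_def)
      moreover have "B \<ge> 0" by (simp add: B_def)
      ultimately have "N * B \<le> (N + 1) * B" "(N+1) * B \<le> (N + 1) * d"
        using N1 mult_left_mono[of B d "N+1"] by (simp_all add: algebra_simps)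
      thus ?thesis using dN1 True by (simp add: L_def)
    next
      case False
      hence j: "k - 1 < k" "1 \<le> k - 1" using kP by auto
      define A where "A = \<bar>g (lam ^ (k - 1))\<bar>"
      have nA: "(N + 1) * A \<le> L" using kmin[OF j(1)] j(2) unfolding P_def A_def L_def by auto
      have "\<bar>g (lam ^ k) - g (lam ^ (k - 1))\<bar> \<le> d * \<bar>lam ^ k - lam ^ (k - 1)\<bar>"
        by (rule gl[OF pI pI])
      also have "\<bar>lam ^ k - lam ^ (k - 1)\<bar> = L" unfolding L_def lk using assms(1,2)
        by (simp add: abs_if algebra_simps)
      finally have "B \<le> A + d * L" unfolding A_def B_def by linarith
      hence "(N + 1) * B \<le> (N + 1) * (A + d * L)" using N1 by (intro mult_left_mono) auto
      hence "(N + 1) * B \<le> (N + 1) * A + (N + 1) * d * L" by (simp add: algebra_simps)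
      hence "(N + 1) * B \<le> L + (N + 1) * d * L" using nA by linarith
      hence "N * ((N + 1) * B) \<le> N * (L + (N + 1) * d * L)" using N1 by (intro mult_left_mono) auto
      hence "(N + 1) * (N * B) \<le> N * L + (N * (N + 1) * d) * L" by (simp add: algebra_simps)
      also have "\<dots> < N * L + 1 * L" using dN2 Lpos by (intro add_strict_left_mono mult_strict_right_mono) auto
      finally have "(N + 1) * (N * B) < (N + 1) * L" by (simp add: algebra_simps)
      thus ?thesis using N1 by (simp add: mult_less_cancel_left_pos)
    qed
    show "\<exists>k::nat. k \<ge> 1 \<and>
            (real n + 1) * \<bar>h (lam ^ k) - lam ^ k\<bar> > lam ^ k * (1 - lam) \<and>
            real n * \<bar>h (lam ^ k) - lam ^ k\<bar> < lam ^ (k - 1) * (1 - lam) \<and>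
            (\<forall>y\<in>I1. \<bar>y - lam ^ k\<bar> < lam ^ (k - 1) * (1 - lam) \<longrightarrow>
               \<bar>(h y - y) - (h (lam ^ k) - lam ^ k)\<bar> < \<bar>h (lam ^ k) - lam ^ k\<bar> / 4)"
    proof (intro exI[of _ k] conjI ballI impI)
      show "1 \<le> k" using kP by simp
      show "(real n + 1) * \<bar>h (lam ^ k) - lam ^ k\<bar> > lam ^ k * (1 - lam)"
        using kP unfolding P_def N_def g_def by simp
      show "real n * \<bar>h (lam ^ k) - lam ^ k\<bar> < lam ^ (k - 1) * (1 - lam)"
        using second unfolding N_def B_def L_def g_def by simp
      fix y assume y: "y \<in> I1" "\<bar>y - lam ^ k\<bar> < lam ^ (k - 1) * (1 - lam)"
      have "\<bar>g y - g (lam ^ k)\<bar> \<le> d * \<bar>y - lam ^ k\<bar>" by (rule gl[OF pI y(1)])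
      also have "\<dots> < d * L" using y(2) dpos by (simp add: L_def)
      finally have o1: "\<bar>g y - g (lam ^ k)\<bar> < d * L" .
      have "4 * (N + 1) * d * L \<le> lam * L" using dN3 Lpos by (simp add: mult_right_mono)
      hence "(N + 1) * (4 * (d * L)) < (N + 1) * B" using PB by (simp add: algebra_simps)
      hence "4 * (d * L) < B" using N1 by (simp add: mult_less_cancel_left_pos)
      hence "\<bar>g y - g (lam ^ k)\<bar> < B / 4" using o1 by linarith
      thus "\<bar>(h y - y) - (h (lam ^ k) - lam ^ k)\<bar> < \<bar>h (lam ^ k) - lam ^ k\<bar> / 4"
        unfolding g_def B_def by simp
    qed
  qed
qed

end
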